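(* Let $K$ be a field, $V$ a finite-dimensional $K$-vector space, $W$ a $K$-subspace of $V$, and $U$ a complement of $W$ in $V$, so $V=W\oplus U$; for $u\in U$ put $W_u=W+u$. Let $\vec{v}=(v_u)_{u\in U}$ be a family of vectors in $V$ and $\vec{\varphi}=(\varphi_u)_{u\in U}$ a family of $K$-endomorphisms of $V$ with $\varphi_u(W)\subseteq W$ for all $u$. Let $f=f_{\vec{\varphi},\vec{v}}:V\to V$ be defined by $f(x)=\varphi_u(x)+v_u$ for $x\in W_u$, and let $g=g_{\vec{\varphi},\vec{v}}:U\to U$ be the unique function with $f(W_u)\subseteq W_{g(u)}$ for all $u\in U$. Then: (1) $f$ is a permutation of $V$ if and only if for every $u\in U$ the restriction of $\varphi_u$ to $W$ is an automorphism of $W$ and $g$ is a permutation of $U$. (2) $f$ is a complete mapping of $V$ if and only if for every $u\in U$ the restriction of $\varphi_u$ to $W$ is a complete automorphism of $W$ (i.e., both $\varphi_u|_W$ and $\varphi_u|_W+\operatorname{id}_W$ are automorphisms of $W$) and $g$ is a complete mapping of $U$.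
   Context: A complete mapping of an additive group $G$ is a permutation $h$ of $G$ such that $x\mapsto h(x)+x$ is also a permutation of $G$. *)

theory Defs
  imports Complex_Main
begin

definition complete_mapping_on :: "'v::ab_group_add set \<Rightarrow> ('v \<Rightarrow> 'v) \<Rightarrow> bool" where
  "complete_mapping_on A h \<longleftrightarrow> bij_betw h A A \<and> bij_betw (\<lambda>x. h x + x) A A"

definition automorphism_on ::
  "('k::field \<Rightarrow> 'v::ab_group_add \<Rightarrow> 'v) \<Rightarrow> 'v set \<Rightarrow> ('v \<Rightarrow> 'v) \<Rightarrow> bool" where
  "automorphism_on scale W h \<longleftrightarrow>
     (\<forall>x\<in>W. \<forall>y\<in>W. h (x + y) = h x + h y) \<and>
     (\<forall>c. \<forall>x\<in>W. h (scale c x) = scale c (h x)) \<and>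
     bij_betw h W W"

definition complete_automorphism_on ::
  "('k::field \<Rightarrow> 'v::ab_group_add \<Rightarrow> 'v) \<Rightarrow> 'v set \<Rightarrow> ('v \<Rightarrow> 'v) \<Rightarrow> bool" where
  "complete_automorphism_on scale W h \<longleftrightarrow>
     automorphism_on scale W h \<and> automorphism_on scale W (\<lambda>x. h x + x)"

definition coset_W :: "'v::ab_group_add set \<Rightarrow> 'v \<Rightarrow> 'v set" where
  "coset_W W u = {w + u | w. w \<in> W}"

definition comp_U :: "'v::ab_group_add set \<Rightarrow> 'v set \<Rightarrow> 'v \<Rightarrow> 'v" where
  "comp_U W U x = (THE u. u \<in> U \<and> x \<in> coset_W W u)"

definition f_map :: "'v::ab_group_add set \<Rightarrow> 'v set \<Rightarrow> ('v \<Rightarrow> 'v \<Rightarrow> 'v) \<Rightarrow> ('v \<Rightarrow> 'v) \<Rightarrow> 'v \<Rightarrow> 'v" where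
  "f_map W U \<phi> v x = \<phi> (comp_U W U x) x + v (comp_U W U x)"

definition g_map :: "'v::ab_group_add set \<Rightarrow> 'v set \<Rightarrow> ('v \<Rightarrow> 'v \<Rightarrow> 'v) \<Rightarrow> ('v \<Rightarrow> 'v) \<Rightarrow> 'v \<Rightarrow> 'v" where
  "g_map W U \<phi> v u = (THE u'. u' \<in> U \<and> f_map W U \<phi> v ` coset_W W u \<subseteq> coset_W W u')"

end

theory Submission imports Defs begin

lemma lin_hom: "Vector_Spaces.linear s s h \<Longrightarrow> module_hom s s h"
  by (simp add: linear_iff_module_hom)

lemma fd_inj_surj:
  fixes scale :: "'k::field \<Rightarrow> 'v::ab_group_add \<Rightarrow> 'v"
  assumes fd: "finite_dimensional_vector_space scale B"
    and W: "module.subspace scale W"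
    and lin: "Vector_Spaces.linear scale scale h"
    and sub: "h ` W \<subseteq> W" and inj: "inj_on h W"
  shows "h ` W = W"
proof -
  interpret fd: finite_dimensional_vector_space scale B by (rule fd)
  interpret p: finite_dimensional_vector_space_pair_1 scale B scale
    by unfold_locales
  interpret lh: module_hom scale scale h using lin_hom[OF lin] .
  have sp: "fd.span W = W" using W by simp
  have "fd.dim (h ` W) = fd.dim W"
    using p.dim_image_eq[OF lin, of W] inj sp by argo
  moreover have "fd.subspace (h ` W)" using lh.subspace_image W by blast
  ultimately show ?thesis using fd.subspace_dim_equal[OF _ W sub] by simp
qed

locale cmset =
  fixes scale :: "'k::field \<Rightarrow> 'v::ab_group_add \<Rightarrow> 'v" and B W U :: "'v set"
  assumes fd: "finite_dimensional_vector_space scale B"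
    and W: "module.subspace scale W"
    and U: "module.subspace scale U"
    and compl_int: "W \<inter> U = {0}"
    and compl_sum: "{w + u | w u. w \<in> W \<and> u \<in> U} = UNIV"
begin

interpretation fd: finite_dimensional_vector_space scale B by (rule fd)

lemma W0: "0 \<in> W" using W fd.subspace_0 by blast
lemma U0: "0 \<in> U" using U fd.subspace_0 by blast
lemma Wadd: "a \<in> W \<Longrightarrow> b \<in> W \<Longrightarrow> a + b \<in> W" using W fd.subspace_add by blast
lemma Wdiff: "a \<in> W \<Longrightarrow> b \<in> W \<Longrightarrow> a - b \<in> W" using W fd.subspace_diff by blast
lemma Uadd: "a \<in> U \<Longrightarrow> b \<in> U \<Longrightarrow> a + b \<in> U" using U fd.subspace_add by blast
lemma Udiff: "a \<in> U \<Longrightarrow> b \<in> U \<Longrightarrow> a - b \<in> U" using U fd.subspace_diff by blast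

lemma decomp: "\<exists>w u. w \<in> W \<and> u \<in> U \<and> x = w + u"
  using compl_sum by blast

lemma uniq:
  assumes "w1 \<in> W" "u1 \<in> U" "w2 \<in> W" "u2 \<in> U" "w1 + u1 = w2 + u2"
  shows "w1 = w2 \<and> u1 = u2"
proof -
  have "w1 - w2 = u2 - u1" using assms(5) by (simp add: algebra_simps)
  moreover have "w1 - w2 \<in> W" using assms Wdiff by blast
  moreover have "u2 - u1 \<in> U" using assms Udiff by blast
  ultimately have "u2 - u1 \<in> W \<inter> U" by simp
  then have "u2 - u1 = 0" using compl_int by blast
  then show ?thesis using \<open>w1 - w2 = u2 - u1\<close> by simp
qed

lemma coset_iff: "x \<in> coset_W W u \<longleftrightarrow> x - u \<in> W"
  unfolding coset_W_def by (auto, metis diff_add_cancel)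

lemma compU_eq: assumes "w \<in> W" "u \<in> U" shows "comp_U W U (w + u) = u"
  unfolding comp_U_def
proof (rule the_equality)
  show "u \<in> U \<and> w + u \<in> coset_W W u" using assms by (simp add: coset_iff)
next
  fix u' assume "u' \<in> U \<and> w + u \<in> coset_W W u'"
  then have "u' \<in> U" "w + u - u' \<in> W" by (auto simp: coset_iff)
  moreover have "w + u = (w + u - u') + u'" by simp
  ultimately show "u' = u" using uniq[of w u "w + u - u'" u'] assms by metis
qed

lemma compU_U: "comp_U W U x \<in> U"
  using decomp[of x] compU_eq by auto

lemma compU_W: "x - comp_U W U x \<in> W"
  using decomp[of x] compU_eq by auto

lemma compU_U_id: "u \<in> U \<Longrightarrow> comp_U W U u = u"
  using compU_eq[of 0 u] W0 by simp

context
  fixes \<phi> :: "'v \<Rightarrow> 'v \<Rightarrow> 'v" and v :: "'v \<Rightarrow> 'v"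
  assumes lin: "\<And>u. u \<in> U \<Longrightarrow> Vector_Spaces.linear scale scale (\<phi> u)"
    and inv: "\<And>u. u \<in> U \<Longrightarrow> \<phi> u ` W \<subseteq> W"
begin

abbreviation "f \<equiv> f_map W U \<phi> v"
abbreviation "g \<equiv> g_map W U \<phi> v"
abbreviation "P \<equiv> comp_U W U"
definition "c u = f u - P (f u)"

lemma c_W: "c u \<in> W" unfolding c_def by (rule compU_W)

lemma f_decomp: assumes "w \<in> W" "u \<in> U"
  shows "f (w + u) = (\<phi> u w + c u) + P (f u)"
proof -
  interpret h: module_hom scale scale "\<phi> u" using lin_hom[OF lin[OF assms(2)]] .
  have "f (w + u) = \<phi> u (w + u) + v u" unfolding f_map_def using compU_eq[OF assms] by simp
  moreover have "f u = \<phi> u u + v u" unfolding f_map_def using compU_U_id[OF assms(2)] by simp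
  ultimately show ?thesis unfolding c_def by (simp add: h.add)
qed

lemma phiW: "w \<in> W \<Longrightarrow> u \<in> U \<Longrightarrow> \<phi> u w \<in> W" using inv by blast

lemma g_eq: assumes "u \<in> U" shows "g u = P (f u)"
  unfolding g_map_def
proof (rule the_equality)
  show "P (f u) \<in> U \<and> f ` coset_W W u \<subseteq> coset_W W (P (f u))"
  proof
    show "P (f u) \<in> U" by (rule compU_U)
    show "f ` coset_W W u \<subseteq> coset_W W (P (f u))"
    proof
      fix y assume "y \<in> f ` coset_W W u"
      then obtain x where x: "x - u \<in> W" "y = f x" by (auto simp: coset_iff)
      have "x = (x - u) + u" by simp
      then have "y = (\<phi> u (x - u) + c u) + P (f u)" using f_decomp[OF x(1) assms] x(2) by metis
      then show "y \<in> coset_W W (P (f u))" using phiW[OF x(1) assms] c_W Wadd by (simp add: coset_iff)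
    qed
  qed
next
  fix u' assume "u' \<in> U \<and> f ` coset_W W u \<subseteq> coset_W W u'"
  moreover have "u \<in> coset_W W u" using W0 by (simp add: coset_iff)
  ultimately have "u' \<in> U" "f u \<in> coset_W W u'" by auto
  then have "u' \<in> U" "f u - u' \<in> W" by (auto simp: coset_iff)
  then show "u' = P (f u)" using compU_eq[of "f u - u'" u'] by simp
qed

lemma f_decomp2: assumes "w \<in> W" "u \<in> U"
  shows "f (w + u) = (\<phi> u w + c u) + g u"
  using f_decomp[OF assms] g_eq[OF assms(2)] by simp

lemma gU: "u \<in> U \<Longrightarrow> g u \<in> U" using g_eq compU_U by simp

lemma auto_iff: assumes "u \<in> U" shows "automorphism_on scale W (\<phi> u) \<longleftrightarrow> inj_on (\<phi> u) W"
proof -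
  interpret h: module_hom scale scale "\<phi> u" using lin_hom[OF lin[OF assms]] .
  have "inj_on (\<phi> u) W \<Longrightarrow> \<phi> u ` W = W"
    using fd_inj_surj[OF fd W lin[OF assms] inv[OF assms]] by blast
  then show ?thesis unfolding automorphism_on_def bij_betw_def by (auto simp: h.add h.scale)
qed

lemma P_f: "P (f x) = g (P x)"
proof -
  obtain w u where wu: "w \<in> W" "u \<in> U" "x = w + u" using decomp by blast
  have e: "f x = (\<phi> u w + c u) + g u" using f_decomp2[OF wu(1,2)] wu(3) by simp
  have "\<phi> u w + c u \<in> W" using phiW[OF wu(1,2)] c_W Wadd by blast
  then have "P (f x) = g u" using e compU_eq gU[OF wu(2)] by simp
  moreover have "P x = u" using compU_eq wu by simp
  ultimately show ?thesis by simp
qed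

lemma part1: "bij f \<longleftrightarrow> (\<forall>u\<in>U. automorphism_on scale W (\<phi> u)) \<and> bij_betw g U U"
proof
  assume bf: "bij f"
  have injf: "f x = f y \<Longrightarrow> x = y" for x y using bf by (simp add: bij_def inj_def)
  have inj: "inj_on (\<phi> u) W" if u: "u \<in> U" for u
  proof (rule inj_onI)
    fix a b assume ab: "a \<in> W" "b \<in> W" "\<phi> u a = \<phi> u b"
    then have "f (a + u) = f (b + u)" using f_decomp2[OF _ u] by simp
    then show "a = b" using injf by force
  qed
  have surjphi: "\<phi> u ` W = W" if u: "u \<in> U" for u
    using fd_inj_surj[OF fd W lin[OF u] inv[OF u] inj[OF u]] .
  have "bij_betw g U U"
    unfolding bij_betw_def
  proof (intro conjI)
    show "inj_on g U"
    proof (rule inj_onI)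
      fix u1 u2 assume u: "u1 \<in> U" "u2 \<in> U" "g u1 = g u2"
      have "c u1 - c u2 \<in> W" using c_W Wdiff by blast
      then obtain w where w: "w \<in> W" "\<phi> u2 w = c u1 - c u2" using surjphi[OF u(2)] by force
      have z: "\<phi> u1 0 = 0" using lin_hom[OF lin[OF u(1)]] module_hom.zero by blast
      have "f (w + u2) = \<phi> u2 w + c u2 + g u2" using f_decomp2[OF w(1) u(2)] .
      also have "\<dots> = c u1 + g u1" using w(2) u(3) by simp
      also have "\<dots> = f (0 + u1)" using f_decomp2[OF W0 u(1)] z by simp
      finally have "f (w + u2) = f (0 + u1)" .
      then have "w + u2 = 0 + u1" by (rule injf)
      then show "u1 = u2" using uniq[OF w(1) u(2) W0 u(1)] by simp
    qed
    show "g ` U = U"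
    proof
      show "g ` U \<subseteq> U" using gU by blast
      show "U \<subseteq> g ` U"
      proof
        fix u' assume u': "u' \<in> U"
        obtain x where "f x = u'" using bf by (metis bij_def surj_def)
        then have "g (P x) = u'" using P_f compU_U_id[OF u'] by metis
        then show "u' \<in> g ` U" using compU_U by blast
      qed
    qed
  qed
  then show "(\<forall>u\<in>U. automorphism_on scale W (\<phi> u)) \<and> bij_betw g U U"
    using inj auto_iff by blast
next
  assume "(\<forall>u\<in>U. automorphism_on scale W (\<phi> u)) \<and> bij_betw g U U"
  then have inj: "\<And>u. u \<in> U \<Longrightarrow> inj_on (\<phi> u) W" and bg: "bij_betw g U U"
    using auto_iff by blast+
  have surjphi: "\<phi> u ` W = W" if u: "u \<in> U" for u
    using fd_inj_surj[OF fd W lin[OF u] inv[OF u] inj[OF u]] .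
  show "bij f" unfolding bij_def
  proof
    show "inj f"
    proof (rule injI)
      fix x y assume fxy: "f x = f y"
      obtain w1 u1 where a: "w1 \<in> W" "u1 \<in> U" "x = w1 + u1" using decomp by blast
      obtain w2 u2 where b: "w2 \<in> W" "u2 \<in> U" "y = w2 + u2" using decomp by blast
      have "P x = u1" "P y = u2" using compU_eq a b by auto
      then have "g u1 = g u2" using P_f[of x] P_f[of y] fxy by simp
      then have uu: "u1 = u2" using bg a(2) b(2) unfolding bij_betw_def inj_on_def by blast
      have "\<phi> u1 w1 + c u1 + g u1 = \<phi> u1 w2 + c u1 + g u1"
        using fxy f_decomp2[OF a(1,2)] f_decomp2[OF b(1,2)] a b uu by simp
      then have "\<phi> u1 w1 = \<phi> u1 w2" by simp
      then have "w1 = w2" using inj[OF a(2)] a b by (meson inj_onD)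
      then show "x = y" using a b uu by simp
    qed
    show "surj f"
    proof -
      have "y \<in> range f" for y
      proof -
      obtain w' u' where b: "w' \<in> W" "u' \<in> U" "y = w' + u'" using decomp by blast
      obtain u where u: "u \<in> U" "g u = u'" using bg b(2) by (metis bij_betw_imp_surj_on imageE)
      have "w' - c u \<in> W" using b c_W Wdiff by blast
      then obtain w where w: "w \<in> W" "\<phi> u w = w' - c u" using surjphi[OF u(1)] by force
      have "f (w + u) = y" using f_decomp2[OF w(1) u(1)] w u b by simp
      then show ?thesis by (metis rangeI)
    qed
    then show ?thesis by blast
    qed
  qed
qed

end
lemma main:
  assumes lin: "\<And>u. u \<in> U \<Longrightarrow> Vector_Spaces.linear scale scale (\<phi> u)"
    and inv: "\<And>u. u \<in> U \<Longrightarrow> \<phi> u ` W \<subseteq> W"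
  shows "(bij (f_map W U \<phi> v) \<longleftrightarrow>
            (\<forall>u\<in>U. automorphism_on scale W (\<phi> u)) \<and> bij_betw (g_map W U \<phi> v) U U)
       \<and> (complete_mapping_on UNIV (f_map W U \<phi> v) \<longleftrightarrow>
            (\<forall>u\<in>U. complete_automorphism_on scale W (\<phi> u)) \<and>
            complete_mapping_on U (g_map W U \<phi> v))"
proof -
  define \<psi> where "\<psi> = (\<lambda>u x. \<phi> u x + x)"
  have lin2: "Vector_Spaces.linear scale scale (\<psi> u)" if u: "u \<in> U" for u
  proof -
    interpret h: module_hom scale scale "\<phi> u" using lin_hom[OF lin[OF u]] .
    have "module_hom scale scale (\<psi> u)"
      unfolding module_hom_def module_hom_axioms_def \<psi>_def
      using fd.module_axioms by (simp add: h.add h.scale fd.scale_right_distrib algebra_simps)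
    then show ?thesis by (simp add: linear_iff_module_hom)
  qed
  have inv2: "\<psi> u ` W \<subseteq> W" if u: "u \<in> U" for u
    using inv[OF u] Wadd unfolding \<psi>_def by blast
  have fpsi: "f_map W U \<psi> v = (\<lambda>x. f_map W U \<phi> v x + x)"
    by (rule ext) (simp add: f_map_def \<psi>_def algebra_simps)
  have gpsi: "g_map W U \<psi> v u = g_map W U \<phi> v u + u" if u: "u \<in> U" for u
  proof -
    have "g_map W U \<psi> v u = comp_U W U (f_map W U \<phi> v u + u)"
      using g_eq[OF lin2 inv2 u] fpsi by simp
    also have "f_map W U \<phi> v u + u
       = (f_map W U \<phi> v u - comp_U W U (f_map W U \<phi> v u)) + (comp_U W U (f_map W U \<phi> v u) + u)"
      by simp
    also have "comp_U W U \<dots> = comp_U W U (f_map W U \<phi> v u) + u"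
      using compU_eq[OF compU_W Uadd[OF compU_U u]] .
    also have "\<dots> = g_map W U \<phi> v u + u" using g_eq[OF lin inv u] by simp
    finally show ?thesis .
  qed
  have p1: "bij (f_map W U \<phi> v) \<longleftrightarrow>
            (\<forall>u\<in>U. automorphism_on scale W (\<phi> u)) \<and> bij_betw (g_map W U \<phi> v) U U"
    by (rule part1[OF lin inv])
  have p2: "bij (f_map W U \<psi> v) \<longleftrightarrow>
            (\<forall>u\<in>U. automorphism_on scale W (\<psi> u)) \<and> bij_betw (g_map W U \<psi> v) U U"
    by (rule part1[OF lin2 inv2])
  have gb: "bij_betw (g_map W U \<psi> v) U U \<longleftrightarrow> bij_betw (\<lambda>x. g_map W U \<phi> v x + x) U U"
    by (rule bij_betw_cong) (simp add: gpsi)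
  show ?thesis
    unfolding complete_mapping_on_def complete_automorphism_on_def
    using p1 p2 gb fpsi unfolding \<psi>_def by auto
qed

end

theorem proposition4p1:
  fixes scale :: "'k::field \<Rightarrow> 'v::ab_group_add \<Rightarrow> 'v"
    and W U :: "'v set"
    and \<phi> :: "'v \<Rightarrow> 'v \<Rightarrow> 'v"
    and v :: "'v \<Rightarrow> 'v"
  assumes fin: "\<exists>B. finite_dimensional_vector_space scale B"
    and W: "module.subspace scale W"
    and U: "module.subspace scale U"
    and compl_int: "W \<inter> U = {0}"
    and compl_sum: "{w + u | w u. w \<in> W \<and> u \<in> U} = UNIV"
    and lin: "\<And>u. u \<in> U \<Longrightarrow> Vector_Spaces.linear scale scale (\<phi> u)"
    and inv: "\<And>u. u \<in> U \<Longrightarrow> \<phi> u ` W \<subseteq> W"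
  shows "(bij (f_map W U \<phi> v) \<longleftrightarrow>
            (\<forall>u\<in>U. automorphism_on scale W (\<phi> u)) \<and> bij_betw (g_map W U \<phi> v) U U)
       \<and> (complete_mapping_on UNIV (f_map W U \<phi> v) \<longleftrightarrow>
            (\<forall>u\<in>U. complete_automorphism_on scale W (\<phi> u)) \<and>
            complete_mapping_on U (g_map W U \<phi> v))"
proof -
  obtain B where B: "finite_dimensional_vector_space scale B" using fin by blast
  interpret cmset scale B W U
    using B W U compl_int compl_sum by (simp add: cmset_def)
  show ?thesis by (rule main[OF lin inv])
qed

end
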